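(* Fix $\ell\geq2$, let $A=\ell\times\omega$, and fix a recursive bijection $\psi:(\ell-1)\times\omega\times\omega\to\omega$. For $\alpha\in\{0,1\}^\omega$ define the binary relation $S_\alpha$ on $A$ by: $S_\alpha(a,b)$ holds iff $a=(i,n)$, $b=(i+1,m)$ for some $i<\ell-1$, $n,m\in\omega$ with $\alpha_{\psi(i,n,m)}=1$. Let $G$ be the set of $\alpha\in\{0,1\}^\omega$ such that $\langle A,S_\alpha,\{0\}\times\omega,\ldots,\{\ell-1\}\times\omega\rangle$ (interpreting $L_j$ as $\{j\}\times\omega$ and $S$ as $S_\alpha$) is a model of the theory $T_\ell$. Then $G$ is a $\Pi^0_2$ subset of $\{0,1\}^\omega$.
   Context: The signature has unary relations $L_0,\ldots,L_{\ell-1}$ and a binary relation $S$. The theory $T_\ell$ consists of: (i) every $x$ satisfies some $L_j(x)$; (ii) no $x$ satisfies $L_i(x)\wedge L_j(x)$ for $i<j$; (iii) $S(x,y)$ and $L_i(x)$ with $i\le \ell-2$ imply $L_{i+1}(y)$; (iv) extension axioms: for each $i<\ell$ and all finite sets $X,Y\subseteq L_{i+1}$ with $X\cap Y=\emptyset$, $Z\subseteq L_i$, and $X',Y'\subseteq L_{i-1}$ with $X'\cap Y'=\emptyset$ (where $L_{-1}$ and $L_\ell$ are read as the empty set), there is $z\in L_i\setminus Z$ with $S(z,x)$ for all $x\in X$, $S(x',z)$ for all $x'\in X'$, $\neg S(z,y)$ for all $y\in Y$ and $\neg S(y',z)$ for all $y'\in Y'$ (one first-order axiom for each $i$ and each tuple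 of cardinalities $(|X|,|Y|,|Z|,|X'|,|Y'|)$). $\Pi^0_2$ refers to the arithmetical hierarchy on subsets of Cantor space $\{0,1\}^\omega$. *)

theory Defs
  imports Main
begin

datatype recf = Z | Sc | Pj nat | Cn recf "recf list" | Pr recf recf | Mn recf

inductive eval :: "recf \<Rightarrow> nat list \<Rightarrow> nat \<Rightarrow> bool"
  and evals :: "recf list \<Rightarrow> nat list \<Rightarrow> nat list \<Rightarrow> bool" where
  eval_Z: "eval Z xs 0"
| eval_Sc: "eval Sc (x # xs) (Suc x)"
| eval_Pj: "i < length xs \<Longrightarrow> eval (Pj i) xs (xs ! i)"
| eval_Cn: "evals gs xs ys \<Longrightarrow> eval f ys z \<Longrightarrow> eval (Cn f gs) xs z"
| eval_Pr0: "eval f xs z \<Longrightarrow> eval (Pr f g) (0 # xs) z"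
| eval_PrS: "eval (Pr f g) (n # xs) y \<Longrightarrow> eval g (n # y # xs) z
              \<Longrightarrow> eval (Pr f g) (Suc n # xs) z"
| eval_Mn: "eval f (n # xs) 0 \<Longrightarrow> (\<forall>k<n. \<exists>y. eval f (k # xs) (Suc y))
              \<Longrightarrow> eval (Mn f) xs n"
| evals_Nil: "evals [] xs []"
| evals_Cons: "eval g xs y \<Longrightarrow> evals gs xs ys \<Longrightarrow> evals (g # gs) xs (y # ys)"

definition recursive_fn :: "nat \<Rightarrow> (nat list \<Rightarrow> nat) \<Rightarrow> bool" where
  "recursive_fn k f \<longleftrightarrow> (\<exists>t. \<forall>xs. length xs = k \<longrightarrow> eval t xs (f xs))"

definition recursive_rel :: "nat \<Rightarrow> (nat list \<Rightarrow> bool) \<Rightarrow> bool" where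
  "recursive_rel k R \<longleftrightarrow> recursive_fn k (\<lambda>xs. if R xs then 1 else 0)"

definition prefix_code :: "(nat \<Rightarrow> bool) \<Rightarrow> nat \<Rightarrow> nat" where
  "prefix_code \<alpha> m = (\<Sum>i<m. if \<alpha> i then 2 ^ i else 0)"

definition Pi02 :: "(nat \<Rightarrow> bool) set \<Rightarrow> bool" where
  "Pi02 G \<longleftrightarrow> (\<exists>R. recursive_rel 3 R \<and>
     (\<forall>\<alpha>. \<alpha> \<in> G \<longleftrightarrow> (\<forall>n. \<exists>m. R [n, m, prefix_code \<alpha> m])))"

definition lev :: "nat \<Rightarrow> 'a set \<Rightarrow> (nat \<Rightarrow> 'a set) \<Rightarrow> int \<Rightarrow> 'a set" where
  "lev l D L k = (if 0 \<le> k \<and> k < int l then L (nat k) \<inter> D else {})"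

definition T_model :: "nat \<Rightarrow> 'a set \<Rightarrow> (nat \<Rightarrow> 'a set) \<Rightarrow> ('a \<Rightarrow> 'a \<Rightarrow> bool) \<Rightarrow> bool" where
  "T_model l D L S \<longleftrightarrow>
     (\<forall>x\<in>D. \<exists>j<l. x \<in> L j) \<and>
     (\<forall>x\<in>D. \<forall>i j. i < j \<and> j < l \<longrightarrow> \<not> (x \<in> L i \<and> x \<in> L j)) \<and>
     (\<forall>x\<in>D. \<forall>y\<in>D. \<forall>i. i + 2 \<le> l \<and> S x y \<and> x \<in> L i \<longrightarrow> y \<in> L (i + 1)) \<and>
     (\<forall>i::int. 0 \<le> i \<and> i < int l \<longrightarrow>
       (\<forall>X Y Z X' Y'.
          finite X \<and> finite Y \<and> finite Z \<and> finite X' \<and> finite Y' \<and>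
          X \<subseteq> lev l D L (i + 1) \<and> Y \<subseteq> lev l D L (i + 1) \<and> X \<inter> Y = {} \<and>
          Z \<subseteq> lev l D L i \<and>
          X' \<subseteq> lev l D L (i - 1) \<and> Y' \<subseteq> lev l D L (i - 1) \<and> X' \<inter> Y' = {} \<longrightarrow>
          (\<exists>z \<in> lev l D L i - Z.
             (\<forall>x\<in>X. S z x) \<and> (\<forall>x'\<in>X'. S x' z) \<and>
             (\<forall>y\<in>Y. \<not> S z y) \<and> (\<forall>y'\<in>Y'. \<not> S y' z))))"

definition S_alpha :: "nat \<Rightarrow> (nat \<Rightarrow> nat \<Rightarrow> nat \<Rightarrow> nat) \<Rightarrow> (nat \<Rightarrow> bool)
                        \<Rightarrow> nat \<times> nat \<Rightarrow> nat \<times> nat \<Rightarrow> bool" where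
  "S_alpha l \<psi> \<alpha> a b \<longleftrightarrow>
     (\<exists>i n m. i + 1 < l \<and> a = (i, n) \<and> b = (i + 1, m) \<and> \<alpha> (\<psi> i n m))"

end

theory Submission
  imports Defs
begin


lemma rf_cong: "recursive_fn k f \<Longrightarrow> (\<And>xs. length xs = k \<Longrightarrow> f xs = g xs) \<Longrightarrow> recursive_fn k g"
  unfolding recursive_fn_def by auto

lemma rf_cong': "recursive_fn k f \<Longrightarrow> k = k' \<Longrightarrow> (\<And>xs. length xs = k' \<Longrightarrow> f xs = g xs) \<Longrightarrow> recursive_fn k' g"
  unfolding recursive_fn_def by auto

lemma rr_cong: "recursive_rel k P \<Longrightarrow> (\<And>xs. length xs = k \<Longrightarrow> P xs = Q xs) \<Longrightarrow> recursive_rel k Q"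
  unfolding recursive_rel_def by (erule rf_cong) auto

lemma rf_const: "recursive_fn k (\<lambda>xs. c)"
proof -
  have "\<forall>xs. eval (((\<lambda>t. Cn Sc [t]) ^^ c) Z) xs c"
    by (induction c) (auto intro: eval_evals.intros)
  then show ?thesis unfolding recursive_fn_def by blast
qed

lemma rf_proj: "i < k \<Longrightarrow> recursive_fn k (\<lambda>xs. xs ! i)"
  unfolding recursive_fn_def by (auto intro: eval_Pj)

lemma rf_Suc: "recursive_fn k f \<Longrightarrow> recursive_fn k (\<lambda>xs. Suc (f xs))"
proof -
  assume "recursive_fn k f"
  then obtain t where t: "\<forall>xs. length xs = k \<longrightarrow> eval t xs (f xs)" unfolding recursive_fn_def by blast
  show ?thesis unfolding recursive_fn_def
    by (rule exI[of _ "Cn Sc [t]"]) (auto intro!: eval_Cn evals_Cons evals_Nil eval_Sc simp: t)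
qed

lemma rf_evals: "\<forall>g\<in>set gs. recursive_fn k g \<Longrightarrow>
   \<exists>ts. \<forall>xs. length xs = k \<longrightarrow> evals ts xs (map (\<lambda>g. g xs) gs)"
proof (induction gs)
  case Nil then show ?case by (auto intro: evals_Nil)
next
  case (Cons g gs)
  then obtain ts where ts: "\<forall>xs. length xs = k \<longrightarrow> evals ts xs (map (\<lambda>g. g xs) gs)" by auto
  from Cons.prems obtain t where t: "\<forall>xs. length xs = k \<longrightarrow> eval t xs (g xs)"
    unfolding recursive_fn_def by auto
  show ?case by (rule exI[of _ "t#ts"]) (auto intro: evals_Cons simp: ts t)
qed

lemma rf_comp: "recursive_fn j f \<Longrightarrow> \<forall>g\<in>set gs. recursive_fn k g \<Longrightarrow> length gs = j \<Longrightarrow>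
   recursive_fn k (\<lambda>xs. f (map (\<lambda>g. g xs) gs))"
proof -
  assume f: "recursive_fn j f" and gs: "\<forall>g\<in>set gs. recursive_fn k g" and l: "length gs = j"
  obtain ts where ts: "\<forall>xs. length xs = k \<longrightarrow> evals ts xs (map (\<lambda>g. g xs) gs)"
    using rf_evals[OF gs] by blast
  obtain t where t: "\<forall>ys. length ys = j \<longrightarrow> eval t ys (f ys)" using f unfolding recursive_fn_def by blast
  show ?thesis unfolding recursive_fn_def
    by (rule exI[of _ "Cn t ts"]) (auto intro!: eval_Cn[OF ts[rule_format] t[rule_format]] simp: l)
qed

fun prec :: "(nat list \<Rightarrow> nat) \<Rightarrow> (nat list \<Rightarrow> nat) \<Rightarrow> nat \<Rightarrow> nat list \<Rightarrow> nat" where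
  "prec f g 0 ys = f ys"
| "prec f g (Suc n) ys = g (n # prec f g n ys # ys)"

lemma rf_prec: "recursive_fn k f \<Longrightarrow> recursive_fn (Suc (Suc k)) g \<Longrightarrow>
   recursive_fn (Suc k) (\<lambda>xs. prec f g (hd xs) (tl xs))"
proof -
  assume f: "recursive_fn k f" and g: "recursive_fn (Suc (Suc k)) g"
  obtain tf where tf: "\<forall>ys. length ys = k \<longrightarrow> eval tf ys (f ys)" using f unfolding recursive_fn_def by blast
  obtain tg where tg: "\<forall>ys. length ys = Suc (Suc k) \<longrightarrow> eval tg ys (g ys)" using g unfolding recursive_fn_def by blast
  have *: "length ys = k \<Longrightarrow> eval (Pr tf tg) (n # ys) (prec f g n ys)" for n ys
    by (induction n) (auto intro: eval_Pr0 eval_PrS simp: tf tg)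
  show ?thesis unfolding recursive_fn_def
  proof (rule exI[of _ "Pr tf tg"], intro allI impI)
    fix xs :: "nat list" assume "length xs = Suc k"
    then show "eval (Pr tf tg) xs (prec f g (hd xs) (tl xs))" using * by (cases xs) auto
  qed
qed

lemma rf_lift1: "recursive_fn 1 h \<Longrightarrow> recursive_fn k f \<Longrightarrow> recursive_fn k (\<lambda>xs. h [f xs])"
  using rf_comp[of 1 h "[f]" k] by auto

lemma rf_lift2: "recursive_fn 2 h \<Longrightarrow> recursive_fn k f \<Longrightarrow> recursive_fn k g \<Longrightarrow> recursive_fn k (\<lambda>xs. h [f xs, g xs])"
  using rf_comp[of 2 h "[f, g]" k] by auto

lemma rf_lift3: "recursive_fn 3 h \<Longrightarrow> recursive_fn k f \<Longrightarrow> recursive_fn k g \<Longrightarrow> recursive_fn k e \<Longrightarrow>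
   recursive_fn k (\<lambda>xs. h [f xs, g xs, e xs])"
  using rf_comp[of 3 h "[f, g, e]" k] by auto

lemma add2: "recursive_fn 2 (\<lambda>xs. xs ! 0 + xs ! 1)"
proof -
  have p: "prec (\<lambda>ys. ys ! 0) (\<lambda>zs. Suc (zs ! 1)) n ys = n + ys ! 0" for n ys
    by (induction n) auto
  have "recursive_fn (Suc 1) (\<lambda>xs. prec (\<lambda>ys. ys ! 0) (\<lambda>zs. Suc (zs ! 1)) (hd xs) (tl xs))"
    by (rule rf_prec) (auto intro: rf_proj rf_Suc)
  then show ?thesis
    apply (rule rf_cong') apply simp apply (simp only: p) apply (auto simp: numeral_eq_Suc length_Suc_conv) done
qed

lemma pred1: "recursive_fn 1 (\<lambda>xs. xs ! 0 - 1)"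
proof -
  have p: "prec (\<lambda>ys. 0) (\<lambda>zs. zs ! 0) n ys = n - 1" for n ys
    by (induction n) auto
  have "recursive_fn (Suc 0) (\<lambda>xs. prec (\<lambda>ys. 0) (\<lambda>zs. zs ! 0) (hd xs) (tl xs))"
    by (rule rf_prec) (auto intro: rf_proj rf_const)
  then show ?thesis
    apply (rule rf_cong') apply simp apply (simp only: p) apply (auto simp: numeral_eq_Suc length_Suc_conv) done
qed

lemma monus2: "recursive_fn 2 (\<lambda>xs. xs ! 1 - xs ! 0)"
proof -
  have p: "prec (\<lambda>ys. ys ! 0) (\<lambda>zs. zs ! 1 - 1) n ys = ys ! 0 - n" for n ys
    by (induction n) auto
  have "recursive_fn 3 (\<lambda>zs. zs ! 1 - 1)"
    using rf_lift1[OF pred1 rf_proj[of 1 3]] by simp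
  then have "recursive_fn (Suc 1) (\<lambda>xs. prec (\<lambda>ys. ys ! 0) (\<lambda>zs. zs ! 1 - 1) (hd xs) (tl xs))"
    by (intro rf_prec) (auto intro: rf_proj simp: numeral_3_eq_3)
  then show ?thesis
    apply (rule rf_cong') apply simp apply (simp only: p) apply (auto simp: numeral_eq_Suc length_Suc_conv) done
qed

lemma rf_add: "recursive_fn k f \<Longrightarrow> recursive_fn k g \<Longrightarrow> recursive_fn k (\<lambda>xs. f xs + g xs)"
  using rf_lift2[OF add2] by simp

lemma rf_monus: "recursive_fn k f \<Longrightarrow> recursive_fn k g \<Longrightarrow> recursive_fn k (\<lambda>xs. f xs - g xs)"
  using rf_lift2[OF monus2, of k g f] by simp

lemma mult2: "recursive_fn 2 (\<lambda>xs. xs ! 0 * xs ! 1)"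
proof -
  have p: "prec (\<lambda>ys. 0) (\<lambda>zs. zs ! 1 + zs ! 2) n ys = n * ys ! 0" for n ys
    by (induction n) auto
  have "recursive_fn (Suc 1) (\<lambda>xs. prec (\<lambda>ys. 0) (\<lambda>zs. zs ! 1 + zs ! 2) (hd xs) (tl xs))"
    by (intro rf_prec rf_add) (auto intro: rf_proj rf_const)
  then show ?thesis
    apply (rule rf_cong') apply simp apply (simp only: p) apply (auto simp: numeral_eq_Suc length_Suc_conv) done
qed

lemma rf_mult: "recursive_fn k f \<Longrightarrow> recursive_fn k g \<Longrightarrow> recursive_fn k (\<lambda>xs. f xs * g xs)"
  using rf_lift2[OF mult2] by simp

lemma pow1: "recursive_fn 1 (\<lambda>xs. 2 ^ (xs ! 0))"
proof -
  have p: "prec (\<lambda>ys. 1) (\<lambda>zs. zs ! 1 + zs ! 1) n ys = 2 ^ n" for n ys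
    by (induction n) auto
  have "recursive_fn (Suc 0) (\<lambda>xs. prec (\<lambda>ys. 1) (\<lambda>zs. zs ! 1 + zs ! 1) (hd xs) (tl xs))"
    by (intro rf_prec rf_add) (auto intro: rf_proj rf_const)
  then show ?thesis
    apply (rule rf_cong') apply simp apply (simp only: p) apply (auto simp: numeral_eq_Suc length_Suc_conv) done
qed

lemma rf_pow: "recursive_fn k f \<Longrightarrow> recursive_fn k (\<lambda>xs. 2 ^ f xs)"
  using rf_lift1[OF pow1] by simp

lemma mod1: "recursive_fn 1 (\<lambda>xs. xs ! 0 mod 2)"
proof -
  have p: "prec (\<lambda>ys. 0) (\<lambda>zs. 1 - zs ! 1) n ys = n mod 2" for n ys
    by (induction n) (auto simp: mod_Suc)
  have "recursive_fn (Suc 0) (\<lambda>xs. prec (\<lambda>ys. 0) (\<lambda>zs. 1 - zs ! 1) (hd xs) (tl xs))"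
    by (intro rf_prec rf_monus) (auto intro: rf_proj rf_const)
  then show ?thesis
    apply (rule rf_cong') apply simp apply (simp only: p) apply (auto simp: numeral_eq_Suc length_Suc_conv) done
qed

lemma rf_mod2: "recursive_fn k f \<Longrightarrow> recursive_fn k (\<lambda>xs. f xs mod 2)"
  using rf_lift1[OF mod1] by simp

lemma map_nth_drop: "a \<le> length zs \<Longrightarrow> map (nth zs) [a..<length zs] = drop a zs"
  by (rule nth_equalityI) auto

lemma rf_bsum: "recursive_fn (Suc k) f \<Longrightarrow> recursive_fn k B \<Longrightarrow>
  recursive_fn k (\<lambda>xs. \<Sum>y<B xs. f (y # xs))"
proof -
  assume f: "recursive_fn (Suc k) f" and B: "recursive_fn k B"
  have g: "recursive_fn (Suc (Suc k)) (\<lambda>zs. zs ! 1 + f (zs ! 0 # drop 2 zs))"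
  proof (rule rf_add)
    show "recursive_fn (Suc (Suc k)) (\<lambda>zs. zs ! 1)" by (rule rf_proj) simp
    have "recursive_fn (Suc (Suc k)) (\<lambda>zs. f (map (\<lambda>g. g zs) (map (\<lambda>i zs. zs ! i) (0 # [2..<Suc (Suc k)]))))"
      by (rule rf_comp[OF f]) (auto intro: rf_proj)
    then show "recursive_fn (Suc (Suc k)) (\<lambda>zs. f (zs ! 0 # drop 2 zs))"
    proof (rule rf_cong)
      fix zs :: "nat list" assume "length zs = Suc (Suc k)"
      then show "f (map (\<lambda>g. g zs) (map (\<lambda>i zs. zs ! i) (0 # [2..<Suc (Suc k)]))) = f (zs ! 0 # drop 2 zs)"
        using map_nth_drop[of 2 zs] by (simp add: comp_def)
    qed
  qed
  have p: "prec (\<lambda>ys. 0) (\<lambda>zs. zs ! 1 + f (zs ! 0 # drop 2 zs)) n ys = (\<Sum>y<n. f (y # ys))" for n ys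
    by (induction n) auto
  have h: "recursive_fn (Suc k) (\<lambda>xs. prec (\<lambda>ys. 0) (\<lambda>zs. zs ! 1 + f (zs ! 0 # drop 2 zs)) (hd xs) (tl xs))"
    by (rule rf_prec[OF rf_const g])
  have "recursive_fn k (\<lambda>xs. (\<lambda>xs. prec (\<lambda>ys. 0) (\<lambda>zs. zs ! 1 + f (zs ! 0 # drop 2 zs)) (hd xs) (tl xs))
          (map (\<lambda>g. g xs) (B # map (\<lambda>i xs. xs ! i) [0..<k])))"
    by (rule rf_comp[OF h]) (auto intro: rf_proj B)
  then show ?thesis
  proof (rule rf_cong)
    fix xs :: "nat list" assume "length xs = k"
    then show "(\<lambda>xs. prec (\<lambda>ys. 0) (\<lambda>zs. zs ! 1 + f (zs ! 0 # drop 2 zs)) (hd xs) (tl xs))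
          (map (\<lambda>g. g xs) (B # map (\<lambda>i xs. xs ! i) [0..<k])) = (\<Sum>y<B xs. f (y # xs))"
      using map_nth[of xs] by (simp only: p) (simp add: comp_def)
  qed
qed




lemma rr_le: "recursive_fn k f \<Longrightarrow> recursive_fn k g \<Longrightarrow> recursive_rel k (\<lambda>xs. f xs \<le> g xs)"
proof -
  assume f: "recursive_fn k f" and g: "recursive_fn k g"
  have "recursive_fn k (\<lambda>xs. 1 - (f xs - g xs))" by (intro rf_monus rf_const f g)
  then show ?thesis unfolding recursive_rel_def by (rule rf_cong) auto
qed

lemma rr_less: "recursive_fn k f \<Longrightarrow> recursive_fn k g \<Longrightarrow> recursive_rel k (\<lambda>xs. f xs < g xs)"
proof -
  assume f: "recursive_fn k f" and g: "recursive_fn k g"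
  have "recursive_rel k (\<lambda>xs. Suc (f xs) \<le> g xs)" by (intro rr_le rf_Suc f g)
  then show ?thesis by (rule rr_cong) auto
qed

lemma rr_not: "recursive_rel k P \<Longrightarrow> recursive_rel k (\<lambda>xs. \<not> P xs)"
proof -
  assume P: "recursive_rel k P"
  have "recursive_fn k (\<lambda>xs. 1 - (if P xs then 1 else 0))"
    using P unfolding recursive_rel_def by (intro rf_monus rf_const)
  then show ?thesis unfolding recursive_rel_def by (rule rf_cong) auto
qed

lemma rr_conj: "recursive_rel k P \<Longrightarrow> recursive_rel k Q \<Longrightarrow> recursive_rel k (\<lambda>xs. P xs \<and> Q xs)"
proof -
  assume P: "recursive_rel k P" and Q: "recursive_rel k Q"
  have "recursive_fn k (\<lambda>xs. (if P xs then 1 else 0) * (if Q xs then 1 else 0))"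
    using P Q unfolding recursive_rel_def by (intro rf_mult)
  then show ?thesis unfolding recursive_rel_def by (rule rf_cong) auto
qed

lemma rr_imp: "recursive_rel k P \<Longrightarrow> recursive_rel k Q \<Longrightarrow> recursive_rel k (\<lambda>xs. P xs \<longrightarrow> Q xs)"
proof -
  assume P: "recursive_rel k P" and Q: "recursive_rel k Q"
  have "recursive_rel k (\<lambda>xs. \<not> (P xs \<and> \<not> Q xs))" by (intro rr_not rr_conj P Q)
  then show ?thesis by (rule rr_cong) auto
qed

lemma rr_iff: "recursive_rel k P \<Longrightarrow> recursive_rel k Q \<Longrightarrow> recursive_rel k (\<lambda>xs. P xs \<longleftrightarrow> Q xs)"
proof -
  assume P: "recursive_rel k P" and Q: "recursive_rel k Q"
  have "recursive_rel k (\<lambda>xs. (P xs \<longrightarrow> Q xs) \<and> (Q xs \<longrightarrow> P xs))" by (intro rr_imp rr_conj P Q)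
  then show ?thesis by (rule rr_cong) auto
qed

lemma rr_ball: "recursive_rel (Suc k) Q \<Longrightarrow> recursive_fn k B \<Longrightarrow>
   recursive_rel k (\<lambda>xs. \<forall>y<B xs. Q (y # xs))"
proof -
  assume Q: "recursive_rel (Suc k) Q" and B: "recursive_fn k B"
  have "recursive_fn (Suc k) (\<lambda>ys. 1 - (if Q ys then 1 else 0))"
    using Q unfolding recursive_rel_def by (intro rf_monus rf_const)
  then have "recursive_fn k (\<lambda>xs. \<Sum>y<B xs. 1 - (if Q (y # xs) then 1 else 0))"
    using B by (rule rf_bsum)
  then have "recursive_rel k (\<lambda>xs. (\<Sum>y<B xs. 1 - (if Q (y # xs) then 1 else 0)) \<le> (0::nat))"
    by (rule rr_le) (rule rf_const)
  then show ?thesis by (rule rr_cong) auto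
qed

lemma rr_bex: "recursive_rel (Suc k) Q \<Longrightarrow> recursive_fn k B \<Longrightarrow>
   recursive_rel k (\<lambda>xs. \<exists>y<B xs. Q (y # xs))"
proof -
  assume Q: "recursive_rel (Suc k) Q" and B: "recursive_fn k B"
  have "recursive_rel (Suc k) (\<lambda>ys. \<not> Q ys)" by (rule rr_not[OF Q])
  then have "recursive_rel k (\<lambda>xs. \<not> (\<forall>y<B xs. \<not> Q (y # xs)))" by (rule rr_not[OF rr_ball[OF _ B]])
  then show ?thesis by (rule rr_cong) auto
qed

definition bitc :: "nat \<Rightarrow> nat \<Rightarrow> bool" where
  "bitc c x \<longleftrightarrow> odd (c div 2 ^ x)"

lemma sum_div: "0 < d \<Longrightarrow> (\<Sum>q<a. if Suc q * d \<le> a then 1 else 0) = a div (d::nat)"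
proof -
  assume d: "0 < d"
  have "(\<Sum>q<a. if Suc q * d \<le> a then 1 else (0::nat)) = card {q\<in>{..<a}. Suc q * d \<le> a}"
    by (simp add: sum.If_cases Collect_conj_eq lessThan_def)
  also have "{q\<in>{..<a}. Suc q * d \<le> a} = {..<a div d}"
  proof -
    have le: "a div d \<le> a" by simp
    have eq: "Suc q * d \<le> a \<longleftrightarrow> q < a div d" for q
    proof -
      have "Suc q * d \<le> a \<longleftrightarrow> Suc q \<le> a div d" by (rule less_eq_div_iff_mult_less_eq[OF d, symmetric])
      also have "\<dots> \<longleftrightarrow> q < a div d" by (rule Suc_le_eq)
      finally show ?thesis .
    qed
    have e1: "{q\<in>{..<a}. Suc q * d \<le> a} = {q\<in>{..<a}. q < a div d}" by (simp only: eq)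
    have e2: "{q\<in>{..<a}. q < a div d} = {..<a div d}" using le by (auto intro: less_le_trans)
    show ?thesis using e1 e2 by simp
  qed
  finally show ?thesis by simp
qed

lemma div2: "recursive_fn 2 (\<lambda>xs. xs ! 0 div 2 ^ (xs ! 1))"
proof -
  have "recursive_rel (Suc 2) (\<lambda>ys. Suc (ys ! 0) * 2 ^ (ys ! 2) \<le> ys ! 1)"
    by (intro rr_le rf_mult rf_Suc rf_pow rf_proj) auto
  then have "recursive_fn 2 (\<lambda>xs. \<Sum>y<xs ! 0. (\<lambda>ys. if Suc (ys ! 0) * 2 ^ (ys ! 2) \<le> ys ! 1 then 1 else 0) (y # xs))"
    unfolding recursive_rel_def by (intro rf_bsum rf_proj) auto
  then show ?thesis
  proof (rule rf_cong)
    fix xs :: "nat list"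
    have "xs ! 0 div 2 ^ (xs ! 1) = (\<Sum>q<xs ! 0. if Suc q * 2 ^ (xs ! 1) \<le> xs ! 0 then 1 else 0)"
      by (rule sum_div[symmetric]) simp
    then show "(\<Sum>y<xs ! 0. (\<lambda>ys. if Suc (ys ! 0) * 2 ^ (ys ! 2) \<le> ys ! 1 then 1 else 0) (y # xs)) =
      xs ! 0 div 2 ^ (xs ! 1)" by (simp add: numeral_2_eq_2)
  qed
qed

lemma rr_bitc: "recursive_fn k f \<Longrightarrow> recursive_fn k g \<Longrightarrow> recursive_rel k (\<lambda>xs. bitc (f xs) (g xs))"
proof -
  assume f: "recursive_fn k f" and g: "recursive_fn k g"
  have "recursive_fn k (\<lambda>xs. (\<lambda>ys. ys ! 0 div 2 ^ (ys ! 1)) [f xs, g xs] mod 2)"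
    by (intro rf_mod2 rf_lift2[OF div2] f g)
  then show ?thesis unfolding recursive_rel_def by (rule rf_cong) (simp add: bitc_def mod2_eq_if)
qed

lemma rf_psi: "recursive_fn 3 (\<lambda>xs. \<psi> (xs ! 0) (xs ! 1) (xs ! 2)) \<Longrightarrow>
  recursive_fn k f \<Longrightarrow> recursive_fn k g \<Longrightarrow> recursive_fn k e \<Longrightarrow>
  recursive_fn k (\<lambda>xs. \<psi> (f xs) (g xs) (e xs))"
  by (drule rf_lift3) simp_all




definition B9 :: "nat \<Rightarrow> (nat \<Rightarrow> nat \<Rightarrow> nat \<Rightarrow> nat) \<Rightarrow> nat list \<Rightarrow> bool" where
  "B9 l \<psi> = (\<lambda>ys. (ys ! 5 + 1 < l \<longrightarrow> \<psi> (ys ! 5) (ys ! 1) (ys ! 0) < ys ! 7 \<and>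
       (bitc (ys ! 8) (\<psi> (ys ! 5) (ys ! 1) (ys ! 0)) \<longleftrightarrow> bitc (ys ! 3) (ys ! 0))) \<and>
     (0 < ys ! 5 \<longrightarrow> \<psi> (ys ! 5 - 1) (ys ! 0) (ys ! 1) < ys ! 7 \<and>
       (bitc (ys ! 8) (\<psi> (ys ! 5 - 1) (ys ! 0) (ys ! 1)) \<longleftrightarrow> bitc (ys ! 2) (ys ! 0))))"

definition B8 where "B8 l \<psi> = (\<lambda>xs. xs ! 3 \<le> xs ! 0 \<and> (\<forall>y<xs ! 3. B9 l \<psi> (y # xs)))"
definition B7 where "B7 l \<psi> = (\<lambda>xs. \<exists>y<xs ! 5. B8 l \<psi> (y # xs))"
definition B6 where "B6 l \<psi> = (\<lambda>xs. \<forall>y<xs ! 3. B7 l \<psi> (y # xs))"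
definition B5 where "B5 l \<psi> = (\<lambda>xs. \<forall>y<xs ! 2. B6 l \<psi> (y # xs))"
definition B4 where "B4 l \<psi> = (\<lambda>xs. \<forall>y<xs ! 1. B5 l \<psi> (y # xs))"
definition B3 where "B3 l \<psi> = (\<lambda>xs. \<forall>y<l. B4 l \<psi> (y # xs))"

lemma B3_rec:
  assumes psi: "recursive_fn 3 (\<lambda>xs. \<psi> (xs ! 0) (xs ! 1) (xs ! 2))"
  shows "recursive_rel 3 (B3 l \<psi>)"
proof -
  note P = rf_psi[OF psi]
  have 9: "recursive_rel 9 (B9 l \<psi>)" unfolding B9_def
    by (intro rr_conj rr_imp rr_iff rr_less rr_bitc P rf_add rf_monus rf_proj rf_const) simp_all
  have 8: "recursive_rel 8 (B8 l \<psi>)" unfolding B8_def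
    by (intro rr_conj rr_le rr_ball[where k=8, simplified, OF 9] rf_proj) simp_all
  have 7: "recursive_rel 7 (B7 l \<psi>)" unfolding B7_def
    by (intro rr_bex[where k=7, simplified, OF 8] rf_proj) simp_all
  have 6: "recursive_rel 6 (B6 l \<psi>)" unfolding B6_def
    by (intro rr_ball[where k=6, simplified, OF 7] rf_proj) simp_all
  have 5: "recursive_rel 5 (B5 l \<psi>)" unfolding B5_def
    by (intro rr_ball[where k=5, simplified, OF 6] rf_proj) simp_all
  have 4: "recursive_rel 4 (B4 l \<psi>)" unfolding B4_def
    by (intro rr_ball[where k=4, simplified, OF 5] rf_proj) simp_all
  show ?thesis unfolding B3_def
    by (intro rr_ball[where k=3, simplified, OF 4] rf_const)
qed




lemma B3_eq: "B3 l \<psi> [n, m, c] \<longleftrightarrow> (\<forall>i<l. \<forall>N<n. \<forall>p<n. \<forall>p'<n. \<exists>k<m. N \<le> k \<and>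
   (\<forall>j<N. (i + 1 < l \<longrightarrow> \<psi> i k j < m \<and> (bitc c (\<psi> i k j) \<longleftrightarrow> bitc p j)) \<and>
           (0 < i \<longrightarrow> \<psi> (i - 1) j k < m \<and> (bitc c (\<psi> (i - 1) j k) \<longleftrightarrow> bitc p' j))))"
  by (simp add: B3_def B4_def B5_def B6_def B7_def B8_def B9_def)

lemma pc_less: "prefix_code \<alpha> m < 2 ^ m"
  by (induction m) (auto simp: prefix_code_def)

lemma pc_Suc: "prefix_code \<alpha> (Suc m) = prefix_code \<alpha> m + (if \<alpha> m then 2 ^ m else 0)"
  by (simp add: prefix_code_def)

lemma pc_split: "Suc j \<le> m \<Longrightarrow> \<exists>r. prefix_code \<alpha> m = prefix_code \<alpha> j + 2 ^ j * ((if \<alpha> j then 1 else 0) + 2 * r)"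
proof (induction m rule: dec_induct)
  case base
  then show ?case by (rule exI[of _ 0]) (simp add: prefix_code_def)
next
  case (step m)
  then obtain r where r: "prefix_code \<alpha> m = prefix_code \<alpha> j + 2 ^ j * ((if \<alpha> j then 1 else 0) + 2 * r)" by blast
  have e: "(2::nat) ^ m = 2 ^ j * (2 * 2 ^ (m - Suc j))"
    using step(1) by (simp flip: power_Suc power_add)
  show ?case
  proof (cases "\<alpha> m")
    case True
    show ?thesis
      by (rule exI[of _ "r + 2 ^ (m - Suc j)"]) (simp only: pc_Suc r e True if_True distrib_left add.assoc)
  next
    case False
    show ?thesis
      by (rule exI[of _ "r"]) (simp add: pc_Suc r False)
  qed
qed

lemma bitc_pc: "j < m \<Longrightarrow> bitc (prefix_code \<alpha> m) j = \<alpha> j"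
proof -
  assume "j < m"
  then obtain r where r: "prefix_code \<alpha> m = prefix_code \<alpha> j + 2 ^ j * ((if \<alpha> j then 1 else 0) + 2 * r)"
    using pc_split[of j m \<alpha>] by auto
  have "prefix_code \<alpha> m div 2 ^ j = (if \<alpha> j then 1 else 0) + 2 * r"
    unfolding r using pc_less[of \<alpha> j] by (simp add: div_mult_self2)
  then show ?thesis unfolding bitc_def by simp
qed

definition OkA :: "nat \<Rightarrow> (nat \<Rightarrow> nat \<Rightarrow> nat \<Rightarrow> nat) \<Rightarrow> (nat \<Rightarrow> bool) \<Rightarrow> nat \<Rightarrow> nat \<Rightarrow> nat \<Rightarrow> nat \<Rightarrow> nat \<Rightarrow> bool" where
  "OkA l \<psi> \<alpha> i N p p' k \<longleftrightarrow> N \<le> k \<and>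
   (\<forall>j<N. (i + 1 < l \<longrightarrow> (\<alpha> (\<psi> i k j) \<longleftrightarrow> bitc p j)) \<and>
           (0 < i \<longrightarrow> (\<alpha> (\<psi> (i - 1) j k) \<longleftrightarrow> bitc p' j)))"

definition Qm where
  "Qm l \<psi> \<alpha> i N p p' m \<longleftrightarrow> (\<exists>k<m. N \<le> k \<and>
   (\<forall>j<N. (i + 1 < l \<longrightarrow> \<psi> i k j < m \<and> (bitc (prefix_code \<alpha> m) (\<psi> i k j) \<longleftrightarrow> bitc p j)) \<and>
           (0 < i \<longrightarrow> \<psi> (i - 1) j k < m \<and> (bitc (prefix_code \<alpha> m) (\<psi> (i - 1) j k) \<longleftrightarrow> bitc p' j))))"

lemma Qm_OkA: "Qm l \<psi> \<alpha> i N p p' m \<Longrightarrow> \<exists>k. OkA l \<psi> \<alpha> i N p p' k"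
  unfolding Qm_def OkA_def by (metis bitc_pc)

lemma OkA_Qm: "OkA l \<psi> \<alpha> i N p p' k \<Longrightarrow> \<exists>M. \<forall>m\<ge>M. Qm l \<psi> \<alpha> i N p p' m"
proof -
  assume ok: "OkA l \<psi> \<alpha> i N p p' k"
  define M where "M = Suc k + (\<Sum>j<N. Suc (\<psi> i k j) + Suc (\<psi> (i - 1) j k))"
  have b: "\<psi> i k j < M \<and> \<psi> (i - 1) j k < M" if "j < N" for j
  proof -
    have "Suc (\<psi> i k j) + Suc (\<psi> (i - 1) j k) \<le> (\<Sum>j<N. Suc (\<psi> i k j) + Suc (\<psi> (i - 1) j k))"
      by (rule member_le_sum) (use that in auto)
    then show ?thesis unfolding M_def by simp
  qed
  show ?thesis
  proof (intro exI allI impI)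
    fix m assume "M \<le> m"
    then have km: "k < m" and bm: "\<And>j. j < N \<Longrightarrow> \<psi> i k j < m \<and> \<psi> (i - 1) j k < m"
      using b unfolding M_def by fastforce+
    show "Qm l \<psi> \<alpha> i N p p' m" unfolding Qm_def
      using ok km bm bitc_pc unfolding OkA_def by metis
  qed
qed

lemma fin_unif: "finite T \<Longrightarrow> (\<forall>t\<in>T. \<exists>M::nat. \<forall>m\<ge>M. Q t m) \<Longrightarrow> \<exists>M. \<forall>t\<in>T. \<forall>m\<ge>M. Q t m"
proof (induction T rule: finite_induct)
  case empty then show ?case by auto
next
  case (insert x F)
  then obtain M1 M2 where "\<forall>m\<ge>M1. Q x m" "\<forall>t\<in>F. \<forall>m\<ge>M2. Q t m" by auto
  then show ?case by (intro exI[of _ "max M1 M2"]) auto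
qed

lemma comb: "(\<forall>i<l. \<forall>N p p'. \<exists>k. OkA l \<psi> \<alpha> i N p p' k) \<longleftrightarrow> (\<forall>n. \<exists>m. B3 l \<psi> [n, m, prefix_code \<alpha> m])"
proof
  assume H: "\<forall>i<l. \<forall>N p p'. \<exists>k. OkA l \<psi> \<alpha> i N p p' k"
  show "\<forall>n. \<exists>m. B3 l \<psi> [n, m, prefix_code \<alpha> m]"
  proof
    fix n :: nat
    let ?T = "{..<l} \<times> {..<n} \<times> {..<n} \<times> {..<n}"
    have "\<forall>t\<in>?T. \<exists>M. \<forall>m\<ge>M. (\<lambda>(i, N, p, p') m. Qm l \<psi> \<alpha> i N p p' m) t m"
      using H OkA_Qm by fastforce
    then obtain M where M: "\<forall>t\<in>?T. \<forall>m\<ge>M. (\<lambda>(i, N, p, p') m. Qm l \<psi> \<alpha> i N p p' m) t m"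
      using fin_unif[of ?T] by blast
    have "B3 l \<psi> [n, M, prefix_code \<alpha> M]"
      unfolding B3_eq
    proof (intro allI impI)
      fix i N p p' assume "i < l" "N < n" "p < n" "p' < n"
      then have "Qm l \<psi> \<alpha> i N p p' M" using M by fastforce
      then show "\<exists>k<M. N \<le> k \<and>
   (\<forall>j<N. (i + 1 < l \<longrightarrow> \<psi> i k j < M \<and> (bitc (prefix_code \<alpha> M) (\<psi> i k j) \<longleftrightarrow> bitc p j)) \<and>
           (0 < i \<longrightarrow> \<psi> (i - 1) j k < M \<and> (bitc (prefix_code \<alpha> M) (\<psi> (i - 1) j k) \<longleftrightarrow> bitc p' j)))"
        unfolding Qm_def .
    qed
    then show "\<exists>m. B3 l \<psi> [n, m, prefix_code \<alpha> m]" ..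
  qed
next
  assume H: "\<forall>n. \<exists>m. B3 l \<psi> [n, m, prefix_code \<alpha> m]"
  show "\<forall>i<l. \<forall>N p p'. \<exists>k. OkA l \<psi> \<alpha> i N p p' k"
  proof (intro allI impI)
    fix i N p p' assume i: "i < l"
    obtain m where "B3 l \<psi> [Suc (N + p + p'), m, prefix_code \<alpha> m]" using H by blast
    moreover have "N < Suc (N + p + p')" "p < Suc (N + p + p')" "p' < Suc (N + p + p')" by simp_all
    ultimately have "Qm l \<psi> \<alpha> i N p p' m" unfolding B3_eq Qm_def using i by blast
    then show "\<exists>k. OkA l \<psi> \<alpha> i N p p' k" by (rule Qm_OkA)
  qed
qed




lemma S_iff: "S_alpha l \<psi> \<alpha> (a, b) (c, d) \<longleftrightarrow> a + 1 < l \<and> c = a + 1 \<and> \<alpha> (\<psi> a b d)"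
  unfolding S_alpha_def by auto

lemma int_quant: "(\<forall>i::int. 0 \<le> i \<and> i < int l \<longrightarrow> P i) \<longleftrightarrow> (\<forall>i<l. P (int i))"
proof
  assume "\<forall>i::int. 0 \<le> i \<and> i < int l \<longrightarrow> P i"
  then show "\<forall>i<l. P (int i)" by auto
next
  assume H: "\<forall>i<l. P (int i)"
  show "\<forall>i::int. 0 \<le> i \<and> i < int l \<longrightarrow> P i"
  proof (intro allI impI)
    fix i :: int assume "0 \<le> i \<and> i < int l"
    then have "nat i < l" "int (nat i) = i" by auto
    then show "P i" using H by metis
  qed
qed

abbreviation "DD l \<equiv> ({..<l} \<times> (UNIV::nat set))"
abbreviation "LL \<equiv> (\<lambda>j::nat. {j} \<times> (UNIV::nat set))"

lemma lev0: "i < l \<Longrightarrow> lev l (DD l) LL (int i) = {i} \<times> UNIV"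
  unfolding lev_def by auto

lemma levp: "lev l (DD l) LL (int i + 1) = (if i + 1 < l then {i + 1} \<times> UNIV else {})"
  unfolding lev_def by (auto simp: nat_int_add)

lemma levm: "i < l \<Longrightarrow> lev l (DD l) LL (int i - 1) = (if 0 < i then {i - 1} \<times> UNIV else {})"
proof -
  assume "i < l"
  moreover have "0 < i \<Longrightarrow> nat (int i - 1) = i - 1" by auto
  ultimately show ?thesis unfolding lev_def by auto
qed

definition EXTI where
  "EXTI l \<psi> \<alpha> (i::int) \<longleftrightarrow> (\<forall>X Y Z X' Y'.
          finite X \<and> finite Y \<and> finite Z \<and> finite X' \<and> finite Y' \<and>
          X \<subseteq> lev l (DD l) LL (i + 1) \<and> Y \<subseteq> lev l (DD l) LL (i + 1) \<and> X \<inter> Y = {} \<and>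
          Z \<subseteq> lev l (DD l) LL i \<and>
          X' \<subseteq> lev l (DD l) LL (i - 1) \<and> Y' \<subseteq> lev l (DD l) LL (i - 1) \<and> X' \<inter> Y' = {} \<longrightarrow>
          (\<exists>z \<in> lev l (DD l) LL i - Z.
             (\<forall>x\<in>X. S_alpha l \<psi> \<alpha> z x) \<and> (\<forall>x'\<in>X'. S_alpha l \<psi> \<alpha> x' z) \<and>
             (\<forall>y\<in>Y. \<not> S_alpha l \<psi> \<alpha> z y) \<and> (\<forall>y'\<in>Y'. \<not> S_alpha l \<psi> \<alpha> y' z)))"

lemma EXT_def: "EXTI l \<psi> \<alpha> (int i) \<longleftrightarrow> (\<forall>X Y Z X' Y'.
          finite X \<and> finite Y \<and> finite Z \<and> finite X' \<and> finite Y' \<and>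
          X \<subseteq> lev l (DD l) LL (int i + 1) \<and> Y \<subseteq> lev l (DD l) LL (int i + 1) \<and> X \<inter> Y = {} \<and>
          Z \<subseteq> lev l (DD l) LL (int i) \<and>
          X' \<subseteq> lev l (DD l) LL (int i - 1) \<and> Y' \<subseteq> lev l (DD l) LL (int i - 1) \<and> X' \<inter> Y' = {} \<longrightarrow>
          (\<exists>z \<in> lev l (DD l) LL (int i) - Z.
             (\<forall>x\<in>X. S_alpha l \<psi> \<alpha> z x) \<and> (\<forall>x'\<in>X'. S_alpha l \<psi> \<alpha> x' z) \<and>
             (\<forall>y\<in>Y. \<not> S_alpha l \<psi> \<alpha> z y) \<and> (\<forall>y'\<in>Y'. \<not> S_alpha l \<psi> \<alpha> y' z)))"
  unfolding EXTI_def by (rule refl)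

lemma T_EXT: "T_model l (DD l) LL (S_alpha l \<psi> \<alpha>) \<longleftrightarrow> (\<forall>i<l. EXTI l \<psi> \<alpha> (int i))"
proof -
  have a: "\<forall>x\<in>DD l. \<exists>j<l. x \<in> LL j" by auto
  have b: "\<forall>x\<in>DD l. \<forall>i j. i < j \<and> j < l \<longrightarrow> \<not> (x \<in> LL i \<and> x \<in> LL j)" by auto
  have c: "\<forall>x\<in>DD l. \<forall>y\<in>DD l. \<forall>i. i + 2 \<le> l \<and> S_alpha l \<psi> \<alpha> x y \<and> x \<in> LL i \<longrightarrow> y \<in> LL (i + 1)"
    unfolding S_alpha_def by auto
  have "T_model l (DD l) LL (S_alpha l \<psi> \<alpha>) \<longleftrightarrow> (\<forall>i::int. 0 \<le> i \<and> i < int l \<longrightarrow> EXTI l \<psi> \<alpha> i)"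
    unfolding T_model_def EXTI_def
    apply (rule iffI)
     apply (elim conjE, assumption)
    apply (intro conjI)
       apply (rule a)
      apply (rule b)
     apply (rule c)
    apply assumption
    done
  then show ?thesis using int_quant[of l "EXTI l \<psi> \<alpha>"] by simp
qed

lemma EXT_Ok: "i < l \<Longrightarrow> EXTI l \<psi> \<alpha> (int i) \<Longrightarrow> \<exists>k. OkA l \<psi> \<alpha> i N p p' k"
proof -
  assume il: "i < l" and E: "EXTI l \<psi> \<alpha> (int i)"
  define X where "X = (\<lambda>j. (i + 1, j)) ` {j. j < N \<and> bitc p j \<and> i + 1 < l}"
  define Y where "Y = (\<lambda>j. (i + 1, j)) ` {j. j < N \<and> \<not> bitc p j \<and> i + 1 < l}"
  define Z where "Z = {i} \<times> {..<N}"
  define X' where "X' = (\<lambda>j. (i - 1, j)) ` {j. j < N \<and> bitc p' j \<and> 0 < i}"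
  define Y' where "Y' = (\<lambda>j. (i - 1, j)) ` {j. j < N \<and> \<not> bitc p' j \<and> 0 < i}"
  have fin: "finite X" "finite Y" "finite Z" "finite X'" "finite Y'"
    unfolding X_def Y_def Z_def X'_def Y'_def by auto
  have sub: "X \<subseteq> lev l (DD l) LL (int i + 1)" "Y \<subseteq> lev l (DD l) LL (int i + 1)"
     "Z \<subseteq> lev l (DD l) LL (int i)" "X' \<subseteq> lev l (DD l) LL (int i - 1)" "Y' \<subseteq> lev l (DD l) LL (int i - 1)"
    unfolding X_def Y_def Z_def X'_def Y'_def using il by (auto simp: lev0 levp levm)
  have dis: "X \<inter> Y = {}" "X' \<inter> Y' = {}"
    unfolding X_def Y_def X'_def Y'_def by auto
  have pre: "finite X \<and> finite Y \<and> finite Z \<and> finite X' \<and> finite Y' \<and>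
          X \<subseteq> lev l (DD l) LL (int i + 1) \<and> Y \<subseteq> lev l (DD l) LL (int i + 1) \<and> X \<inter> Y = {} \<and>
          Z \<subseteq> lev l (DD l) LL (int i) \<and>
          X' \<subseteq> lev l (DD l) LL (int i - 1) \<and> Y' \<subseteq> lev l (DD l) LL (int i - 1) \<and> X' \<inter> Y' = {}"
    using fin sub dis by (intro conjI)
  have ex: "\<exists>z \<in> lev l (DD l) LL (int i) - Z.
             (\<forall>x\<in>X. S_alpha l \<psi> \<alpha> z x) \<and> (\<forall>x'\<in>X'. S_alpha l \<psi> \<alpha> x' z) \<and>
             (\<forall>y\<in>Y. \<not> S_alpha l \<psi> \<alpha> z y) \<and> (\<forall>y'\<in>Y'. \<not> S_alpha l \<psi> \<alpha> y' z)"
    by (rule E[unfolded EXT_def, THEN spec[where x=X], THEN spec[where x=Y], THEN spec[where x=Z],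
          THEN spec[where x=X'], THEN spec[where x=Y'], THEN mp, OF pre])
  then obtain z where z: "z \<in> lev l (DD l) LL (int i) - Z"
     and zX: "\<forall>x\<in>X. S_alpha l \<psi> \<alpha> z x" and zX': "\<forall>x'\<in>X'. S_alpha l \<psi> \<alpha> x' z"
     and zY: "\<forall>y\<in>Y. \<not> S_alpha l \<psi> \<alpha> z y" and zY': "\<forall>y'\<in>Y'. \<not> S_alpha l \<psi> \<alpha> y' z"
    by (elim bexE conjE) blast
  have z1: "z \<in> {i} \<times> UNIV" "z \<notin> Z" using z il by (auto simp: lev0)
  define k where "k = snd z"
  have zk: "z = (i, k)" using z1 unfolding k_def by auto
  have kN: "N \<le> k" using z1(2) unfolding zk Z_def by auto
  have "OkA l \<psi> \<alpha> i N p p' k"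
    unfolding OkA_def
  proof (intro conjI allI impI kN)
    fix j assume j: "j < N"
    {
      assume l1: "i + 1 < l"
      show "\<alpha> (\<psi> i k j) \<longleftrightarrow> bitc p j"
      proof (cases "bitc p j")
        case True
        then have "(i + 1, j) \<in> X" unfolding X_def using j l1 by auto
        then show ?thesis using zX True by (auto simp: zk S_iff)
      next
        case False
        then have "(i + 1, j) \<in> Y" unfolding Y_def using j l1 by auto
        then show ?thesis using zY False l1 by (auto simp: zk S_iff)
      qed
    }
    {
      assume i0: "0 < i"
      have e: "i - 1 + 1 = i" using i0 by simp
      show "\<alpha> (\<psi> (i - 1) j k) \<longleftrightarrow> bitc p' j"
      proof (cases "bitc p' j")
        case True
        then have "(i - 1, j) \<in> X'" unfolding X'_def using j i0 by auto
        then show ?thesis using zX' True by (auto simp: zk S_iff)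
      next
        case False
        then have "(i - 1, j) \<in> Y'" unfolding Y'_def using j i0 by auto
        then show ?thesis using zY' False il e by (auto simp: zk S_iff)
      qed
    }
  qed
  then show ?thesis ..
qed

lemma Ok_EXT: "i < l \<Longrightarrow> (\<forall>N p p'. \<exists>k. OkA l \<psi> \<alpha> i N p p' k) \<Longrightarrow> EXTI l \<psi> \<alpha> (int i)"
  unfolding EXT_def
proof (intro allI impI, elim conjE)
  fix X Y Z X' Y' :: "(nat \<times> nat) set"
  assume il: "i < l" and H: "\<forall>N p p'. \<exists>k. OkA l \<psi> \<alpha> i N p p' k"
    and fin: "finite X" "finite Y" "finite Z" "finite X'" "finite Y'"
    and sX: "X \<subseteq> lev l (DD l) LL (int i + 1)" and sY: "Y \<subseteq> lev l (DD l) LL (int i + 1)"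
    and dXY: "X \<inter> Y = {}" and sZ: "Z \<subseteq> lev l (DD l) LL (int i)"
    and sX': "X' \<subseteq> lev l (DD l) LL (int i - 1)" and sY': "Y' \<subseteq> lev l (DD l) LL (int i - 1)"
    and dXY': "X' \<inter> Y' = {}"
  have "finite (snd ` (X \<union> Y \<union> Z \<union> X' \<union> Y'))" using fin by auto
  then obtain N where N: "\<And>e. e \<in> X \<union> Y \<union> Z \<union> X' \<union> Y' \<Longrightarrow> snd e < N"
    unfolding finite_nat_set_iff_bounded by blast
  define p where "p = prefix_code (\<lambda>j. j \<in> snd ` X) N"
  define p' where "p' = prefix_code (\<lambda>j. j \<in> snd ` X') N"
  have bp: "j < N \<Longrightarrow> bitc p j \<longleftrightarrow> j \<in> snd ` X" for j unfolding p_def by (rule bitc_pc)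
  have bp': "j < N \<Longrightarrow> bitc p' j \<longleftrightarrow> j \<in> snd ` X'" for j unfolding p'_def by (rule bitc_pc)
  obtain k where ok: "OkA l \<psi> \<alpha> i N p p' k" using H by blast
  then have kN: "N \<le> k" unfolding OkA_def by simp
  have okj: "\<And>j. j < N \<Longrightarrow> (i + 1 < l \<longrightarrow> (\<alpha> (\<psi> i k j) \<longleftrightarrow> bitc p j)) \<and>
           (0 < i \<longrightarrow> (\<alpha> (\<psi> (i - 1) j k) \<longleftrightarrow> bitc p' j))"
    using ok unfolding OkA_def by blast
  have Xf: "x \<in> X \<Longrightarrow> i + 1 < l \<and> x = (i + 1, snd x)" for x
    using sX by (auto simp: levp split: if_splits)
  have Yf: "y \<in> Y \<Longrightarrow> i + 1 < l \<and> y = (i + 1, snd y)" for y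
    using sY by (auto simp: levp split: if_splits)
  have X'f: "x \<in> X' \<Longrightarrow> 0 < i \<and> x = (i - 1, snd x)" for x
    using sX' il by (auto simp: levm split: if_splits)
  have Y'f: "y \<in> Y' \<Longrightarrow> 0 < i \<and> y = (i - 1, snd y)" for y
    using sY' il by (auto simp: levm split: if_splits)
  have Zf: "z \<in> Z \<Longrightarrow> snd z < N" for z using N by auto
  show "\<exists>z\<in>lev l (DD l) LL (int i) - Z.
       (\<forall>x\<in>X. S_alpha l \<psi> \<alpha> z x) \<and> (\<forall>x'\<in>X'. S_alpha l \<psi> \<alpha> x' z) \<and>
       (\<forall>y\<in>Y. \<not> S_alpha l \<psi> \<alpha> z y) \<and> (\<forall>y'\<in>Y'. \<not> S_alpha l \<psi> \<alpha> y' z)"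
  proof (intro bexI conjI ballI)
    show "(i, k) \<in> lev l (DD l) LL (int i) - Z"
      using il kN Zf by (force simp: lev0)
  next
    fix x assume x: "x \<in> X"
    then have xN: "snd x < N" using N by auto
    have "snd x \<in> snd ` X" using x by auto
    then have "\<alpha> (\<psi> i k (snd x))" using okj[OF xN] bp[OF xN] Xf[OF x] by auto
    then show "S_alpha l \<psi> \<alpha> (i, k) x" using Xf[OF x] by (metis S_iff)
  next
    fix x assume x: "x \<in> X'"
    then have xN: "snd x < N" using N by auto
    have "snd x \<in> snd ` X'" using x by auto
    then have a: "\<alpha> (\<psi> (i - 1) (snd x) k)" using okj[OF xN] bp'[OF xN] X'f[OF x] by auto
    have "i - 1 + 1 < l" "i = i - 1 + 1" using X'f[OF x] il by auto
    then show "S_alpha l \<psi> \<alpha> x (i, k)" using X'f[OF x] a by (metis S_iff)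
  next
    fix y assume y: "y \<in> Y"
    then have yN: "snd y < N" using N by auto
    have "snd y \<notin> snd ` X"
    proof
      assume "snd y \<in> snd ` X"
      then obtain x where "x \<in> X" "snd x = snd y" by auto
      then have "x = y" using Xf Yf y by (metis prod.collapse)
      then show False using \<open>x \<in> X\<close> y dXY by auto
    qed
    then have "\<not> \<alpha> (\<psi> i k (snd y))" using okj[OF yN] bp[OF yN] Yf[OF y] by auto
    then show "\<not> S_alpha l \<psi> \<alpha> (i, k) y" using Yf[OF y] by (metis S_iff)
  next
    fix y assume y: "y \<in> Y'"
    then have yN: "snd y < N" using N by auto
    have "snd y \<notin> snd ` X'"
    proof
      assume "snd y \<in> snd ` X'"
      then obtain x where "x \<in> X'" "snd x = snd y" by auto
      then have "x = y" using X'f Y'f y by (metis prod.collapse)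
      then show False using \<open>x \<in> X'\<close> y dXY' by auto
    qed
    then have "\<not> \<alpha> (\<psi> (i - 1) (snd y) k)" using okj[OF yN] bp'[OF yN] Y'f[OF y] by auto
    then show "\<not> S_alpha l \<psi> \<alpha> y (i, k)" using Y'f[OF y] by (metis S_iff)
  qed
qed

theorem lemma2:
  fixes l :: nat and \<psi> :: "nat \<Rightarrow> nat \<Rightarrow> nat \<Rightarrow> nat"
  assumes "l \<ge> 2"
    and "bij_betw (\<lambda>(i, n, m). \<psi> i n m) ({..<l - 1} \<times> UNIV \<times> UNIV) UNIV"
    and "recursive_fn 3 (\<lambda>xs. \<psi> (xs ! 0) (xs ! 1) (xs ! 2))"
  shows "Pi02 {\<alpha>. T_model l ({..<l} \<times> UNIV) (\<lambda>j. {j} \<times> UNIV) (S_alpha l \<psi> \<alpha>)}"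
  unfolding Pi02_def
proof (intro exI conjI allI)
  show "recursive_rel 3 (B3 l \<psi>)" by (rule B3_rec[OF assms(3)])
next
  fix \<alpha>
  have "T_model l (DD l) LL (S_alpha l \<psi> \<alpha>) \<longleftrightarrow> (\<forall>i<l. \<forall>N p p'. \<exists>k. OkA l \<psi> \<alpha> i N p p' k)"
    unfolding T_EXT
  proof (intro iffI allI impI)
    fix i N p p' assume H: "\<forall>i<l. EXTI l \<psi> \<alpha> (int i)" and i: "i < l"
    show "\<exists>k. OkA l \<psi> \<alpha> i N p p' k" using EXT_Ok[OF i] H i by blast
  next
    fix i assume H: "\<forall>i<l. \<forall>N p p'. \<exists>k. OkA l \<psi> \<alpha> i N p p' k" and i: "i < l"
    show "EXTI l \<psi> \<alpha> (int i)" by (rule Ok_EXT[OF i]) (use H i in blast)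
  qed
  then show "\<alpha> \<in> {\<alpha>. T_model l ({..<l} \<times> UNIV) (\<lambda>j. {j} \<times> UNIV) (S_alpha l \<psi> \<alpha>)} \<longleftrightarrow>
     (\<forall>n. \<exists>m. B3 l \<psi> [n, m, prefix_code \<alpha> m])"
    using comb[of l \<psi> \<alpha>] by simp
qed


end
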